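(* For integers $N\ge2$ and $k\ge1$, let $E_k(2^N)$ (resp. $I_k(2^N)$) be the number of integers $0\le u<2^N$ such that $\sum_{i\ge0}\varepsilon_i(u)\varepsilon_{i+1}(u)\cdots\varepsilon_{i+k}(u)$ is even (resp. odd). Then for every real $A>1$, as $N\to\infty$, uniformly for integers $k\ge A\log N/\log2$, $$\frac{E_k(2^N)}{2^N}\ge1-2N^{1-A}+o(N^{1-A})\qquad\text{and}\qquad\frac{I_k(2^N)}{2^N}\le2N^{1-A}+o(N^{1-A}).$$
   Context: $\varepsilon_i(u)$ denotes the $i$-th binary digit of $u$ ($\varepsilon_0$ the units digit); the sum $\sum_i\varepsilon_i(u)\cdots\varepsilon_{i+k}(u)$ counts the (possibly overlapping) occurrences of $k+1$ consecutive digits $1$ in the binary expansion of $u$. *)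

theory Defs
  imports Complex_Main "HOL-Library.Landau_Symbols"
begin

definition bindigit :: "nat \<Rightarrow> nat \<Rightarrow> nat" where
  "bindigit i u = (u div 2 ^ i) mod 2"

(* sum over i >= 0 of eps_i(u) eps_{i+1}(u) ... eps_{i+k}(u);
   all terms with i > u vanish since u < 2^i, so the sum is over i \<le> u *)
definition runsum :: "nat \<Rightarrow> nat \<Rightarrow> nat" where
  "runsum k u = (\<Sum>i\<le>u. \<Prod>j\<le>k. bindigit (i + j) u)"

definition E_count :: "nat \<Rightarrow> nat \<Rightarrow> nat" where
  "E_count k N = card {u. u < 2 ^ N \<and> even (runsum k u)}"

definition I_count :: "nat \<Rightarrow> nat \<Rightarrow> nat" where
  "I_count k N = card {u. u < 2 ^ N \<and> odd (runsum k u)}"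

end

theory Submission
  imports Defs
begin

lemma ones_mod:
  "(\<forall>j<m. (v div 2^j) mod 2 = (1::nat)) \<Longrightarrow> v mod 2^m = 2^m - 1"
proof (induction m arbitrary: v)
  case 0 then show ?case by simp
next
  case (Suc m)
  have h: "\<forall>j<m. (v div 2 div 2^j) mod 2 = (1::nat)"
  proof (intro allI impI)
    fix j assume "j < m"
    then have "(v div 2^(Suc j)) mod 2 = 1" using Suc.prems[rule_format, of "Suc j"] by simp
    then show "(v div 2 div 2^j) mod 2 = 1" by (simp add: div_mult2_eq)
  qed
  have v0: "v mod 2 = 1" using Suc.prems[rule_format, of 0] by simp
  have "v mod 2^(Suc m) = 2 * (v div 2 mod 2^m) + v mod 2"
    by (metis mod_mult2_eq power_Suc)
  also have "\<dots> = 2 * (2^m - 1) + 1" using Suc.IH[OF h] v0 by simp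
  also have "\<dots> = 2^Suc m - 1"
  proof -
    have "(1::nat) \<le> 2^m" by simp
    then show ?thesis by (simp only: power_Suc)
  qed
  finally show ?case .
qed

lemma card_T:
  assumes "i + m \<le> N"
  shows "card {u::nat. u < 2^N \<and> (u div 2^i) mod 2^m = c} * 2^m \<le> 2^N"
proof -
  let ?f = "\<lambda>(a,b). a + 2^i * (c + 2^m * b) :: nat"
  have sub: "{u::nat. u < 2^N \<and> (u div 2^i) mod 2^m = c} \<subseteq> ?f ` ({..<2^i} \<times> {..<2^(N-i-m)})"
  proof
    fix u assume "u \<in> {u::nat. u < 2^N \<and> (u div 2^i) mod 2^m = c}"
    then have u: "u < 2^N" "(u div 2^i) mod 2^m = c" by auto
    have e1: "u = u mod 2^i + 2^i * (u div 2^i)" by simp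
    have e2: "u div 2^i = (u div 2^i) mod 2^m + 2^m * (u div 2^i div 2^m)" by simp
    have e3: "u = ?f (u mod 2^i, u div 2^i div 2^m)" using e1 e2 u(2) by simp
    have "u div 2^i div 2^m = u div 2^(i+m)" by (simp add: div_mult2_eq power_add)
    also have "\<dots> < 2^(N-i-m)"
    proof -
      have "2^N = (2::nat)^(i+m) * 2^(N-i-m)" using assms by (simp flip: power_add)
      then show ?thesis using u(1) by (simp add: div_less_iff_less_mult mult.commute)
    qed
    finally show "u \<in> ?f ` ({..<2^i} \<times> {..<2^(N-i-m)})"
      using e3 by (intro image_eqI[where x="(u mod 2^i, u div 2^i div 2^m)"]) auto
  qed
  have "card {u::nat. u < 2^N \<and> (u div 2^i) mod 2^m = c} \<le> card ({..<2^i::nat} \<times> {..<2^(N-i-m)::nat})"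
    by (rule order.trans[OF card_mono[OF _ sub] card_image_le]) auto
  also have "\<dots> = 2^i * 2^(N-i-m)" by (simp add: card_cartesian_product)
  finally have "card {u::nat. u < 2^N \<and> (u div 2^i) mod 2^m = c} * 2^m \<le> 2^i * 2^(N-i-m) * 2^m" by simp
  also have "\<dots> = 2^N" using assms by (simp flip: power_add)
  finally show ?thesis .
qed


lemma odd_sub:
  assumes "u < 2^N" "odd (runsum k u)"
  shows "\<exists>i. i + k < N \<and> (u div 2^i) mod 2^(Suc k) = 2^Suc k - 1"
proof -
  have "runsum k u \<noteq> 0" using assms(2) by (metis even_zero)
  then obtain i where "(\<Prod>j\<le>k. bindigit (i + j) u) \<noteq> 0"
    unfolding runsum_def by (meson sum.neutral)
  then have nz: "\<forall>j\<le>k. bindigit (i + j) u \<noteq> 0" by simp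
  have one: "\<forall>j\<le>k. bindigit (i + j) u = 1"
    using nz unfolding bindigit_def by (metis mod2_eq_if)
  have "i + k < N"
  proof (rule ccontr)
    assume "\<not> i + k < N"
    then have "(2::nat)^N \<le> 2^(i+k)" by simp
    then have "u < 2^(i+k)" using assms(1) by linarith
    then have "u div 2^(i+k) = 0" by simp
    then show False using one[rule_format, of k] unfolding bindigit_def by simp
  qed
  moreover have "(u div 2^i) mod 2^(Suc k) = 2^Suc k - 1"
  proof (rule ones_mod, intro allI impI)
    fix j assume "j < Suc k"
    then have "bindigit (i+j) u = 1" using one by simp
    then show "(u div 2^i div 2^j) mod 2 = 1"
      unfolding bindigit_def by (simp add: div_mult2_eq power_add)
  qed
  ultimately show ?thesis by blast
qed

lemma card_I:
  "card {u. u < 2 ^ N \<and> odd (runsum k u)} * 2^(Suc k) \<le> N * 2^N"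
proof -
  define T where "T i = {u::nat. u < 2^N \<and> (u div 2^i) mod 2^(Suc k) = 2^Suc k - 1}" for i
  define J where "J = {i. i + k < N}"
  have J: "finite J" "card J \<le> N"
  proof -
    have "J \<subseteq> {..<N}" unfolding J_def by auto
    then show "finite J" using finite_subset by blast
    show "card J \<le> N" using card_mono[OF _ \<open>J \<subseteq> {..<N}\<close>] by simp
  qed
  have sub: "{u. u < 2 ^ N \<and> odd (runsum k u)} \<subseteq> (\<Union>i\<in>J. T i)"
  proof
    fix u assume "u \<in> {u. u < 2 ^ N \<and> odd (runsum k u)}"
    then have u: "u < 2^N" "odd (runsum k u)" by auto
    obtain i where "i + k < N" "(u div 2^i) mod 2^(Suc k) = 2^Suc k - 1"
      using odd_sub[OF u] by blast
    then have "i \<in> J" "u \<in> T i" using u(1) unfolding T_def J_def by auto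
    then show "u \<in> (\<Union>i\<in>J. T i)" by blast
  qed
  have fT: "finite (T i)" for i unfolding T_def by auto
  have "card {u. u < 2 ^ N \<and> odd (runsum k u)} \<le> card (\<Union>i\<in>J. T i)"
    using sub J(1) fT by (intro card_mono finite_UN_I) auto
  also have "\<dots> \<le> (\<Sum>i\<in>J. card (T i))" by (rule card_UN_le[OF J(1)])
  finally have "card {u. u < 2 ^ N \<and> odd (runsum k u)} * 2^(Suc k) \<le> (\<Sum>i\<in>J. card (T i)) * 2^(Suc k)"
    by simp
  also have "\<dots> = (\<Sum>i\<in>J. card (T i) * 2^(Suc k))" by (simp add: sum_distrib_right)
  also have "\<dots> \<le> (\<Sum>i\<in>J. 2^N)"
  proof (rule sum_mono)
    fix i assume "i \<in> J"
    then have "i + Suc k \<le> N" unfolding J_def by simp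
    then show "card (T i) * 2^(Suc k) \<le> 2^N" unfolding T_def by (rule card_T)
  qed
  also have "\<dots> = card J * 2^N" by simp
  also have "\<dots> \<le> N * 2^N" using J(2) by simp
  finally show ?thesis .
qed

lemma EI_sum: "E_count k N + I_count k N = 2^N"
proof -
  have "{u. u < 2 ^ N \<and> even (runsum k u)} \<union> {u. u < 2 ^ N \<and> odd (runsum k u)} = {..<2^N}" by auto
  moreover have "card ({u. u < 2 ^ N \<and> even (runsum k u)} \<union> {u. u < 2 ^ N \<and> odd (runsum k u)})
     = card {u. u < 2 ^ N \<and> even (runsum k u)} + card {u. u < 2 ^ N \<and> odd (runsum k u)}"
    by (rule card_Un_disjoint) auto
  ultimately show ?thesis unfolding E_count_def I_count_def by simp
qed

theorem mainTheorem14: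
  fixes A :: real
  assumes "A > 1"
  shows "\<exists>g :: nat \<Rightarrow> real. g \<in> o(\<lambda>N. real N powr (1 - A)) \<and>
    (\<forall>N k. N \<ge> 2 \<longrightarrow> k \<ge> 1 \<longrightarrow> real k \<ge> A * ln (real N) / ln 2 \<longrightarrow>
       real (E_count k N) / 2 ^ N \<ge> 1 - 2 * real N powr (1 - A) - g N \<and>
       real (I_count k N) / 2 ^ N \<le> 2 * real N powr (1 - A) + g N)"
proof (intro exI[of _ "\<lambda>_. 0"] conjI allI impI)
  show "(\<lambda>_. 0::real) \<in> o(\<lambda>N. real N powr (1 - A))" by simp
  fix N k :: nat
  assume N: "N \<ge> 2" and "k \<ge> 1" and kA: "real k \<ge> A * ln (real N) / ln 2"
  have Npos: "real N > 0" using N by simp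
  have "A * ln (real N) \<le> real k * ln 2" using kA by (simp add: divide_le_eq)
  then have "exp (A * ln (real N)) \<le> exp (real k * ln 2)" by simp
  moreover have "exp (real k * ln 2) = (2::real) ^ k" by (simp add: exp_of_nat_mult)
  ultimately have pk: "real N powr A \<le> 2 ^ k"
    using Npos by (simp add: powr_def mult.commute)
  have c: "real (I_count k N) * 2^(Suc k) \<le> real N * 2^N"
  proof -
    have "real (I_count k N * 2^(Suc k)) \<le> real (N * 2^N)"
      using card_I[of N k] unfolding I_count_def by (simp only: of_nat_le_iff)
    then show ?thesis by simp
  qed
  have "real (I_count k N) / 2^N \<le> real N / 2^(Suc k)"
    using c by (simp add: pos_divide_le_eq pos_le_divide_eq mult.commute)
  also have "\<dots> \<le> real N / 2^k" by (intro divide_left_mono) auto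
  also have "\<dots> \<le> real N / real N powr A"
    using pk Npos by (intro divide_left_mono) auto
  also have "\<dots> = real N powr (1 - A)" using Npos by (simp add: powr_diff)
  finally have I: "real (I_count k N) / 2^N \<le> real N powr (1 - A)" .
  have "real (E_count k N) = 2^N - real (I_count k N)"
  proof -
    have "real (E_count k N + I_count k N) = real ((2::nat)^N)" using EI_sum[of k N] by (simp only:)
    then show ?thesis by simp
  qed
  then have "real (E_count k N) / 2^N = 1 - real (I_count k N) / 2^N"
    by (simp add: field_simps)
  moreover have "real N powr (1 - A) \<ge> 0" by simp
  ultimately show "real (E_count k N) / 2 ^ N \<ge> 1 - 2 * real N powr (1 - A) - 0"
    and "real (I_count k N) / 2 ^ N \<le> 2 * real N powr (1 - A) + 0" using I by linarith+
qed

end
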